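(* Let $\mathcal{O}$ be the observation space consisting of all real $2\times n$ matrices ($n\ge 1$ arbitrary) whose columns are unit vectors in $\mathbb{R}^2$, and let $\mathcal{A}=\{(\hat u,\sigma): \hat u\in\mathbb{R}^2,\ \|\hat u\|=1,\ 0\le\sigma\le 1\}$ be the action space. For $\theta\in\mathbb{R}$ let $R(\theta)\in SO(2)$ denote rotation by angle $\theta$, and let a rotation $R\in SO(2)$ act on $O\in\mathcal{O}$ by $O\mapsto RO$ (rotating every column) and on an action $a=(\hat u,\sigma)\in\mathcal{A}$ by $Ra:=(R\hat u,\sigma)$. For $O\in\mathcal{O}$ with $n$ columns such that $O\mathbf{1}_n\neq 0$ (where $\mathbf{1}_n$ is the all-ones vector of length $n$), define $\bar u(O)=\frac{O\mathbf{1}_n}{\|O\mathbf{1}_n\|}$ and let $\theta^*(O)$ be the angle of $\bar u(O)$ measured from the $x$-axis, i.e. the angle with $\bar u(O)=(\cos\theta^*(O),\sin\theta^*(O))^T$ (determined modulo $2\pi$). Define $$T_{\mathrm{pre}}(O)=R(\theta^*(O))^T O,\qquad T_{\mathrm{post}}^{O}(a)=R(\theta^*(O))\,a \quad (a\in\mathcal{A}).$$ Then for any function $m:\mathcal{O}\to\mathcal{A}$, the map $F(O):=T_{\mathrm{post}}^{O}\big(m(T_{\mathrm{pre}}(O))\big)$ is equivariant with respect to $SO(2)$: for every $R\in SO(2)$ and every $O\in\mathcal{O}$ with $O\mathbf{1}_n\neq 0$, one has $F(RO)=R\,F(O)$.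
   Context: In the paper, an observation of an agent is the collection of unit vectors (bearings) pointing from the agent to each of its visible neighbours, written as a $2\times n$ matrix whose columns are these unit vectors. An action is a movement direction (unit vector) together with a step size in $[0,1]$. A function $m$ from observations to actions is called equivariant with respect to rotations if $m(RO)=R\,m(O)$ for all observations $O$ and all $R\in SO(2)$, where rotations act on actions by rotating the direction component only. *)

theory Defs
  imports "HOL-Analysis.Analysis"
begin

text \<open>An observation is a 2 x n matrix whose columns are unit vectors; we represent it
  by the list of its columns (n = length of the list, n >= 1).\<close>
type_synonym obs = "(real^2) list"
type_synonym action = "(real^2) \<times> real"

definition is_obs :: "obs \<Rightarrow> bool" where
  "is_obs Ob \<longleftrightarrow> Ob \<noteq> [] \<and> (\<forall>c\<in>set Ob. norm c = 1)"

definition is_action :: "action \<Rightarrow> bool" where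
  "is_action a \<longleftrightarrow> norm (fst a) = 1 \<and> 0 \<le> snd a \<and> snd a \<le> 1"

definition rot :: "real \<Rightarrow> real^2^2" where
  "rot \<theta> = vector [vector [cos \<theta>, - sin \<theta>], vector [sin \<theta>, cos \<theta>]]"

definition SO2 :: "(real^2^2) set" where
  "SO2 = {R. orthogonal_matrix R \<and> det R = 1}"

definition rot_obs :: "real^2^2 \<Rightarrow> obs \<Rightarrow> obs" where
  "rot_obs R Ob = map (\<lambda>c. R *v c) Ob"

definition rot_act :: "real^2^2 \<Rightarrow> action \<Rightarrow> action" where
  "rot_act R a = (R *v fst a, snd a)"

text \<open>Ob 1_n is the sum of the columns.\<close>
definition ubar :: "obs \<Rightarrow> real^2" where
  "ubar Ob = sum_list Ob /\<^sub>R norm (sum_list Ob)"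

definition theta_star :: "obs \<Rightarrow> real" where
  "theta_star Ob = (SOME \<theta>. ubar Ob = vector [cos \<theta>, sin \<theta>])"

definition T_pre :: "obs \<Rightarrow> obs" where
  "T_pre Ob = rot_obs (transpose (rot (theta_star Ob))) Ob"

definition T_post :: "obs \<Rightarrow> action \<Rightarrow> action" where
  "T_post Ob a = rot_act (rot (theta_star Ob)) a"

definition F :: "(obs \<Rightarrow> action) \<Rightarrow> obs \<Rightarrow> action" where
  "F m Ob = T_post Ob (m (T_pre Ob))"

end

theory Submission
  imports Defs
begin
definition rotu :: "real^2 \<Rightarrow> real^2^2" where
  "rotu u = vector [vector [u$1, - u$2], vector [u$2, u$1]]"

lemma norm2: "norm (x::real^2) = sqrt (x$1^2 + x$2^2)"
  by (simp add: norm_vec_def L2_set_def sum_2)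

lemma rot_rotu: "rot t = rotu (vector [cos t, sin t])"
  by (simp add: rot_def rotu_def)

lemma unit_angle: "norm (u::real^2) = 1 \<Longrightarrow> \<exists>t. u = vector [cos t, sin t]"
proof -
  assume "norm u = 1"
  hence "u$1^2 + u$2^2 = 1" by (simp add: norm2)
  then obtain t where "u$1 = cos t" "u$2 = sin t" using sincos_total_2pi_le by blast
  hence "u = vector [cos t, sin t]" by (simp add: vec_eq_iff forall_2)
  thus ?thesis by blast
qed

lemma rot_theta_star: assumes "sum_list Ob \<noteq> 0" shows "rot (theta_star Ob) = rotu (ubar Ob)"
proof -
  have "norm (ubar Ob) = 1" using assms by (simp add: ubar_def)
  then have "\<exists>t. ubar Ob = vector [cos t, sin t]" by (rule unit_angle)
  hence "ubar Ob = vector [cos (theta_star Ob), sin (theta_star Ob)]"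
    unfolding theta_star_def by (rule someI_ex)
  thus ?thesis by (simp add: rot_rotu)
qed

lemma SO2_rotu: assumes "R \<in> SO2" shows "\<exists>v. v$1 * v$1 + v$2 * v$2 = 1 \<and> R = rotu v"
proof -
  define a where "a = R$1$1"
  define b where "b = R$1$2"
  define c where "c = R$2$1"
  define d where "d = R$2$2"
  have o: "transpose R ** R = mat 1" and dt: "det R = 1" using assms by (auto simp: SO2_def orthogonal_matrix)
  have e1: "a*a + c*c = 1" using arg_cong[OF o, of "\<lambda>M. M$1$1"]
    by (simp add: matrix_matrix_mult_def sum_2 transpose_def mat_def a_def c_def)
  have e2: "a*b + c*d = 0" using arg_cong[OF o, of "\<lambda>M. M$1$2"]
    by (simp add: matrix_matrix_mult_def sum_2 transpose_def mat_def a_def b_def c_def d_def)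
  have e3: "a*d - b*c = 1" using dt by (simp add: det_2 a_def b_def c_def d_def)
  have "b = b*(a*a+c*c)" using e1 by simp
  also have "\<dots> = a*(a*b+c*d) - c*(a*d-b*c)" by (simp add: algebra_simps)
  finally have hb: "b = -c" using e2 e3 by simp
  have "d = d*(a*a+c*c)" using e1 by simp
  also have "\<dots> = c*(a*b+c*d) + a*(a*d-b*c)" by (simp add: algebra_simps)
  finally have hd: "d = a" using e2 e3 by simp
  have "R = rotu (vector [a, c])" using hb hd
    by (simp add: vec_eq_iff forall_2 rotu_def a_def b_def c_def d_def)
  moreover have "(vector [a, c] :: real^2)$1 * (vector [a, c] :: real^2)$1 + (vector [a, c] :: real^2)$2 * (vector [a, c] :: real^2)$2 = 1"
    using e1 by simp
  ultimately show ?thesis by blast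
qed

lemma mv_scaleR: "(M::real^2^2) *v (k *\<^sub>R x) = k *\<^sub>R (M *v x)"
  by (simp add: vec_eq_iff forall_2 matrix_vector_mult_def sum_2 algebra_simps)

lemma sum_rot: "sum_list (map (\<lambda>c. R *v c) Ob) = R *v sum_list Ob"
  by (induction Ob) (auto simp: matrix_vector_right_distrib)

lemma norm_rotu: assumes "v$1 * v$1 + v$2 * v$2 = 1" shows "norm (rotu v *v x) = norm x"
proof -
  have "(v$1*x$1 - v$2*x$2)^2 + (v$2*x$1 + v$1*x$2)^2 = (v$1 * v$1 + v$2 * v$2)*(x$1^2+x$2^2)"
    by (simp add: power2_eq_square algebra_simps)
  thus ?thesis using assms
    by (simp add: norm2 rotu_def matrix_vector_mult_def sum_2)
qed

lemma rotu_mult: "rotu (rotu v *v w) = rotu v ** rotu w"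
  by (simp add: vec_eq_iff forall_2 rotu_def matrix_vector_mult_def matrix_matrix_mult_def sum_2 algebra_simps)

theorem lemma1:
  fixes m :: "obs \<Rightarrow> action" and R :: "real^2^2" and Ob :: obs
  assumes "\<forall>Ob'. is_obs Ob' \<longrightarrow> is_action (m Ob')"
    and "R \<in> SO2"
    and "is_obs Ob"
    and "sum_list Ob \<noteq> 0"
  shows "F m (rot_obs R Ob) = rot_act R (F m Ob)"
proof -
  obtain v where v: "v$1 * v$1 + v$2 * v$2 = 1" and Rv: "R = rotu v" using SO2_rotu[OF assms(2)] by blast
  have RT: "transpose R ** R = mat 1" using assms(2) by (auto simp: SO2_def orthogonal_matrix)
  let ?s = "sum_list Ob"
  have s': "sum_list (rot_obs R Ob) = R *v ?s" by (simp add: rot_obs_def sum_rot)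
  have ns: "norm (R *v ?s) = norm ?s" using norm_rotu[OF v] Rv by simp
  have nz: "sum_list (rot_obs R Ob) \<noteq> 0" using s' ns assms(4) by auto
  have ub: "ubar (rot_obs R Ob) = R *v ubar Ob"
    using s' ns by (simp add: ubar_def mv_scaleR)
  have th: "rot (theta_star (rot_obs R Ob)) = R ** rot (theta_star Ob)"
    using rot_theta_star[OF nz] rot_theta_star[OF assms(4)] ub Rv rotu_mult by simp
  let ?U = "rot (theta_star Ob)"
  have pre: "T_pre (rot_obs R Ob) = T_pre Ob"
  proof -
    have "\<And>c. transpose (R ** ?U) *v (R *v c) = transpose ?U *v c"
      by (simp del: vector_transpose_matrix add: matrix_transpose_mul matrix_vector_mul_assoc flip: matrix_mul_assoc add: RT)
    hence "rot_obs (transpose (R ** ?U)) (rot_obs R Ob) = rot_obs (transpose ?U) Ob"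
      by (simp add: rot_obs_def)
    thus ?thesis unfolding T_pre_def th .
  qed
  show ?thesis
    by (simp add: F_def T_post_def pre th rot_act_def matrix_vector_mul_assoc)
qed
end
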